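(* Let $\mathfrak{g}$ be a finite-dimensional real Lie algebra with linear bivector $\bar\alpha^{ij}=\tfrac12c_k^{ij}X^k$. Every graph $\Gamma\in G_n$ whose operator $B_{\Gamma,\bar\alpha}$ is not identically zero is either a loop graph or a Sym-admissible graph. Thus the bi-differential operators occurring in Kontsevich's quantization of $\mathfrak{g}^*$ are of two types: those corresponding to loop graphs and those corresponding to Sym-admissible graphs.
   Context: Basis $X^1,\ldots,X^d$ of $\mathfrak{g}$ with $[X^i,X^j]=c_k^{ij}X^k$; the $X^i$ are linear coordinates on $\mathfrak{g}^*$, $\partial_i=\partial/\partial X^i$. $G_n$: oriented labeled graphs with vertex set $\{1,\ldots,n\}\cup\{X,Y\}$ and $2n$ edges, exactly two ordered edges $e_k^1,e_k^2$ starting at each aerial vertex $k$ and ending at vertices other than $k$, none starting at $X,Y$. $B_{\Gamma,\bar\alpha}(f,g)=\sum_{I:E_\Gamma\to\{1,\ldots,d\}}\Big[\prod_{k=1}^n\Big(\prod_{e=( *,k)}\partial_{I(e)}\Big)\bar\alpha^{I(e_k^1)I(e_k^2)}\Big]\Big(\prod_{e=( *,X)}\partial_{I(e)}\Big)f\,\Big(\prod_{e=( *,Y)}\partial_{I(e)}\Big)g$. Kontsevich's quantization of $\mathfrak{g}^*$ is $f\star g=\sum_n\epsilon^n\sum_{\Gamma\in G_n}w_K(\Gamma)B_{\Gamma,\bar\alpha}(f,g)$ for certain numerical weights $w_K(\Gamma)$. A loop graph is one containing a directed cycle. A graph is Sym-admissible if it is the graph with no edges, or if, after redirecting each edge ending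 at $X$ (resp. $Y$) to its own new leaf labeled $X$ (resp. $Y$), it becomes a disjoint union of rooted binary trees whose internal nodes are the aerial vertices (edges directed from a node to its two children) and whose leaves are the new $X/Y$ leaves. *)

theory Defs
  imports "HOL-Analysis.Analysis" "HOL-Library.FuncSet"
begin

datatype vtx = Aer nat | VX | VY

text \<open>A graph Gamma in G_n is given by assigning to each aerial vertex k in {1..n}
  the pair (target of e_k^1, target of e_k^2). Values outside {1..n} are irrelevant.\<close>
type_synonym graph = "nat \<Rightarrow> vtx \<times> vtx"

definition verts :: "nat \<Rightarrow> vtx set" where
  "verts n = Aer ` {1..n} \<union> {VX, VY}"

definition in_G :: "nat \<Rightarrow> graph \<Rightarrow> bool" where
  "in_G n \<Gamma> \<longleftrightarrow> (\<forall>k\<in>{1..n}.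
      fst (\<Gamma> k) \<in> verts n - {Aer k} \<and> snd (\<Gamma> k) \<in> verts n - {Aer k})"

text \<open>Edges: (k,1) is e_k^1 and (k,2) is e_k^2.\<close>
definition edges :: "nat \<Rightarrow> (nat \<times> nat) set" where
  "edges n = {1..n} \<times> {1, 2}"

definition tgt :: "graph \<Rightarrow> nat \<times> nat \<Rightarrow> vtx" where
  "tgt \<Gamma> e = (if snd e = 1 then fst (\<Gamma> (fst e)) else snd (\<Gamma> (fst e)))"

definition edges_into :: "nat \<Rightarrow> graph \<Rightarrow> vtx \<Rightarrow> (nat \<times> nat) list" where
  "edges_into n \<Gamma> v =
     filter (\<lambda>e. tgt \<Gamma> e = v) (concat (map (\<lambda>k. [(k, 1), (k, 2)]) [1..<Suc n]))"

definition pd :: "'d::finite \<Rightarrow> (real^'d \<Rightarrow> real) \<Rightarrow> (real^'d \<Rightarrow> real)" where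
  "pd i f = (\<lambda>x. frechet_derivative f (at x) (axis i 1))"

fun pds :: "'d::finite list \<Rightarrow> (real^'d \<Rightarrow> real) \<Rightarrow> (real^'d \<Rightarrow> real)" where
  "pds [] f = f"
| "pds (i # is) f = pd i (pds is f)"

definition smooth_fun :: "(real^'d::finite \<Rightarrow> real) \<Rightarrow> bool" where
  "smooth_fun f \<longleftrightarrow> (\<forall>is. pds is f differentiable_on UNIV)"

text \<open>Structure constants: c i j k = c_k^{ij}, i.e. [X^i, X^j] = sum_k c_k^{ij} X^k.\<close>
definition lin_bivector :: "('d::finite \<Rightarrow> 'd \<Rightarrow> 'd \<Rightarrow> real) \<Rightarrow> 'd \<Rightarrow> 'd \<Rightarrow> real^'d \<Rightarrow> real" where
  "lin_bivector c i j = (\<lambda>x. (1/2) * (\<Sum>k\<in>UNIV. c i j k * x $ k))"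

definition B_op :: "nat \<Rightarrow> graph \<Rightarrow> ('d::finite \<Rightarrow> 'd \<Rightarrow> real^'d \<Rightarrow> real)
                    \<Rightarrow> (real^'d \<Rightarrow> real) \<Rightarrow> (real^'d \<Rightarrow> real) \<Rightarrow> real^'d \<Rightarrow> real" where
  "B_op n \<Gamma> \<alpha> f g x =
     (\<Sum>I\<in>edges n \<rightarrow>\<^sub>E (UNIV :: 'd set).
        (\<Prod>k\<in>{1..n}. pds (map I (edges_into n \<Gamma> (Aer k))) (\<alpha> (I (k,1)) (I (k,2))) x)
        * pds (map I (edges_into n \<Gamma> VX)) f x
        * pds (map I (edges_into n \<Gamma> VY)) g x)"

definition edge_rel :: "nat \<Rightarrow> graph \<Rightarrow> (vtx \<times> vtx) set" where
  "edge_rel n \<Gamma> = {(Aer (fst e), tgt \<Gamma> e) | e. e \<in> edges n}"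

definition loop_graph :: "nat \<Rightarrow> graph \<Rightarrow> bool" where
  "loop_graph n \<Gamma> \<longleftrightarrow> (\<exists>v. (v, v) \<in> (edge_rel n \<Gamma>)\<^sup>+)"

text \<open>Rooted binary trees: internal nodes labelled by aerial vertices (ordered children:
  first child = target of e_k^1, second child = target of e_k^2), leaves labelled X or Y.\<close>
datatype xy = LX | LY
datatype btree = Leaf xy | Node nat btree btree

fun root_vtx :: "btree \<Rightarrow> vtx" where
  "root_vtx (Leaf LX) = VX"
| "root_vtx (Leaf LY) = VY"
| "root_vtx (Node k l r) = Aer k"

fun internal :: "btree \<Rightarrow> nat list" where
  "internal (Leaf a) = []"
| "internal (Node k l r) = k # internal l @ internal r"

text \<open>Every internal node k of the tree has as children exactly the targets of e_k^1, e_k^2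
  (edges to X / Y being redirected to their own new leaves).\<close>
fun tree_of_graph :: "graph \<Rightarrow> btree \<Rightarrow> bool" where
  "tree_of_graph \<Gamma> (Leaf a) = True"
| "tree_of_graph \<Gamma> (Node k l r) =
     (root_vtx l = fst (\<Gamma> k) \<and> root_vtx r = snd (\<Gamma> k)
      \<and> tree_of_graph \<Gamma> l \<and> tree_of_graph \<Gamma> r)"

text \<open>Sym-admissible: no edges, or the redirected graph is the disjoint union of the rooted
  binary trees ts (each aerial vertex is an internal node of exactly one tree, exactly once;
  all vertices of the redirected graph have a parent or are roots of internal-node trees).\<close>
definition sym_admissible :: "nat \<Rightarrow> graph \<Rightarrow> bool" where
  "sym_admissible n \<Gamma> \<longleftrightarrow> n = 0 \<or>
     (\<exists>ts :: btree list.
        (\<forall>t\<in>set ts. (\<exists>k l r. t = Node k l r) \<and> tree_of_graph \<Gamma> t)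
        \<and> distinct (concat (map internal ts))
        \<and> set (concat (map internal ts)) = {1..n})"

end

theory Submission
  imports Defs
begin

lemma pd_const: "pd i (\<lambda>x. c) = (\<lambda>x. 0)"
proof -
  have "frechet_derivative (\<lambda>x. c) (at x) = (\<lambda>_. 0)" for x :: "real^'a"
    by (rule frechet_derivative_at[symmetric]) (rule has_derivative_const)
  then show ?thesis unfolding pd_def by simp
qed

lemma pds_const: "pds (i # xs) (\<lambda>x. c) = (\<lambda>x. 0)"
  by (induction xs arbitrary: i) (simp_all add: pd_const)

lemma lin_deriv: "((\<lambda>x::real^'d::finite. (1/2) * (\<Sum>k\<in>UNIV. a k * x $ k)) has_derivative
   (\<lambda>y. (1/2) * (\<Sum>k\<in>UNIV. a k * y $ k))) (at x)"
  apply (rule has_derivative_mult_right) apply (rule has_derivative_sum) apply (rule has_derivative_mult_right)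
  apply (rule bounded_linear_imp_has_derivative) apply (rule bounded_linear_vec_nth) done

lemma pd_lin: "pd i (lin_bivector c j l) = (\<lambda>x. lin_bivector c j l (axis i 1))"
proof -
  have "frechet_derivative (lin_bivector c j l) (at x) = lin_bivector c j l" for x
    unfolding lin_bivector_def by (rule frechet_derivative_at[OF lin_deriv, symmetric])
  then show ?thesis unfolding pd_def by simp
qed

lemma pds_lin_const: "xs \<noteq> [] \<Longrightarrow> \<exists>a. pds xs (lin_bivector c j l) = (\<lambda>x. a)"
proof (induction xs)
  case Nil then show ?case by simp
next
  case (Cons i xs)
  show ?case
  proof (cases "xs = []")
    case True then show ?thesis by (intro exI[of _ "lin_bivector c j l (axis i 1)"]) (simp add: pd_lin)
  next
    case False
    then obtain a where "pds xs (lin_bivector c j l) = (\<lambda>x. a)" using Cons by blast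
    then show ?thesis by (intro exI[of _ 0]) (simp add: pd_const)
  qed
qed

lemma pds_lin_zero: "length xs \<ge> 2 \<Longrightarrow> pds xs (lin_bivector c j l) x = 0"
proof -
  assume "length xs \<ge> 2"
  then have "xs = hd xs # tl xs" "tl xs \<noteq> []" by (cases xs; cases "tl xs"; auto)+
  then obtain i xs' where "xs = i # xs'" "xs' \<noteq> []" by blast
  then obtain a where "pds xs' (lin_bivector c j l) = (\<lambda>x. a)" using pds_lin_const by blast
  then show ?thesis using \<open>xs = i # xs'\<close> by (simp add: pd_const)
qed

lemma edge_rel_iff: "(u,w) \<in> edge_rel n \<Gamma> \<longleftrightarrow> (\<exists>k\<in>{1..n}. u = Aer k \<and> (w = fst (\<Gamma> k) \<or> w = snd (\<Gamma> k)))"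
  unfolding edge_rel_def edges_def tgt_def by force

lemma finite_edge_rel: "finite (edge_rel n \<Gamma>)"
  unfolding edge_rel_def edges_def by (rule finite_image_set) simp

lemma no_path_XY: "(VX, Aer m) \<in> (edge_rel n \<Gamma>)\<^sup>* \<Longrightarrow> False" "(VY, Aer m) \<in> (edge_rel n \<Gamma>)\<^sup>* \<Longrightarrow> False"
  by (auto elim: converse_rtranclE simp: edge_rel_iff)

definition uniq_in :: "nat \<Rightarrow> graph \<Rightarrow> bool" where
  "uniq_in n \<Gamma> \<longleftrightarrow> (\<forall>j. \<forall>e\<in>edges n. \<forall>e'\<in>edges n. tgt \<Gamma> e = Aer j \<longrightarrow> tgt \<Gamma> e' = Aer j \<longrightarrow> e = e')"

lemma src_uniq:
  assumes U: "uniq_in n \<Gamma>" and a: "(u, Aer j) \<in> edge_rel n \<Gamma>" and b: "(w, Aer j) \<in> edge_rel n \<Gamma>"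
  shows "u = w"
proof -
  obtain e where e: "e \<in> edges n" "u = Aer (fst e)" "tgt \<Gamma> e = Aer j" using a unfolding edge_rel_def by auto
  obtain e' where e': "e' \<in> edges n" "w = Aer (fst e')" "tgt \<Gamma> e' = Aer j" using b unfolding edge_rel_def by auto
  have "e = e'" using U e e' unfolding uniq_in_def by blast
  then show ?thesis using e e' by simp
qed

lemma comparable:
  assumes U: "uniq_in n \<Gamma>" and xz: "(x,z) \<in> (edge_rel n \<Gamma>)\<^sup>*"
  shows "z = Aer j \<Longrightarrow> (y,z) \<in> (edge_rel n \<Gamma>)\<^sup>* \<Longrightarrow> (x,y) \<in> (edge_rel n \<Gamma>)\<^sup>* \<or> (y,x) \<in> (edge_rel n \<Gamma>)\<^sup>*"
  using xz
proof (induction arbitrary: j y rule: rtrancl_induct)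
  case base
  then show ?case by blast
next
  case (step w z)
  show ?case
  proof (cases "y = z")
    case True
    then show ?thesis using step.hyps by (meson rtrancl.rtrancl_into_rtrancl)
  next
    case False
    then obtain u where yu: "(y,u) \<in> (edge_rel n \<Gamma>)\<^sup>*" and uz: "(u,z) \<in> edge_rel n \<Gamma>"
      using step.prems(2) by (meson rtranclE)
    have "u = w" using src_uniq[OF U] uz step.hyps(2) step.prems(1) by blast
    moreover obtain k where "w = Aer k" using step.hyps(2) by (auto simp: edge_rel_iff)
    ultimately show ?thesis using step.IH yu by blast
  qed
qed

lemma sym_adm:
  assumes G: "in_G n \<Gamma>" and nl: "\<not> loop_graph n \<Gamma>" and U: "uniq_in n \<Gamma>"
  shows "sym_admissible n \<Gamma>"
proof -
  define r where "r = edge_rel n \<Gamma>"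
  have acyc: "acyclic r" using nl unfolding loop_graph_def acyclic_def r_def by blast
  have fin: "finite r" unfolding r_def by (rule finite_edge_rel)
  have ri: "(u,w) \<in> r \<longleftrightarrow> (\<exists>k\<in>{1..n}. u = Aer k \<and> (w = fst (\<Gamma> k) \<or> w = snd (\<Gamma> k)))" for u w
    unfolding r_def by (rule edge_rel_iff)
  have noXY: "(VX, Aer m) \<notin> r\<^sup>*" "(VY, Aer m) \<notin> r\<^sup>*" for m
    unfolding r_def using no_path_XY by blast+
  have src: "(u, Aer j) \<in> r \<Longrightarrow> (w, Aer j) \<in> r \<Longrightarrow> u = w" for u w j
    unfolding r_def using src_uniq[OF U] by blast
  have cmp: "(x, Aer j) \<in> r\<^sup>* \<Longrightarrow> (y, Aer j) \<in> r\<^sup>* \<Longrightarrow> (x,y) \<in> r\<^sup>* \<or> (y,x) \<in> r\<^sup>*" for x y j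
    unfolding r_def using comparable[OF U] by blast
  have nocyc: "(x,x) \<notin> r\<^sup>+" for x using acyc unfolding acyclic_def by blast
  have Gk: "fst (\<Gamma> k) \<in> verts n" "snd (\<Gamma> k) \<in> verts n" if "k \<in> {1..n}" for k
    using G that unfolding in_G_def by auto
  have vA: "Aer m \<in> verts n \<longleftrightarrow> m \<in> {1..n}" for m unfolding verts_def by auto
  define Desc where "Desc v = {m. (v, Aer m) \<in> r\<^sup>*}" for v
  have trees: "v \<in> verts n \<longrightarrow> (\<exists>t. tree_of_graph \<Gamma> t \<and> root_vtx t = v \<and> set (internal t) = Desc v \<and> distinct (internal t))" for v
  proof (induction v rule: wf_induct[OF finite_acyclic_wf_converse[OF fin acyc]])
    case (1 v)
    show ?case
    proof (cases v)
      case VX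
      then show ?thesis using noXY by (intro impI exI[of _ "Leaf LX"]) (auto simp: Desc_def)
    next
      case VY
      then show ?thesis using noXY by (intro impI exI[of _ "Leaf LY"]) (auto simp: Desc_def)
    next
      case (Aer k)
      show ?thesis
      proof
        assume "v \<in> verts n"
        then have k: "k \<in> {1..n}" using Aer vA by simp
        define a where "a = fst (\<Gamma> k)"
        define b where "b = snd (\<Gamma> k)"
        have ra: "(Aer k, a) \<in> r" and rb: "(Aer k, b) \<in> r" using k ri a_def b_def by auto
        obtain ta where ta: "tree_of_graph \<Gamma> ta" "root_vtx ta = a" "set (internal ta) = Desc a" "distinct (internal ta)"
          using 1 ra Gk[OF k] Aer a_def by auto
        obtain tb where tb: "tree_of_graph \<Gamma> tb" "root_vtx tb = b" "set (internal tb) = Desc b" "distinct (internal tb)"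
          using 1 rb Gk[OF k] Aer b_def by auto
        have setD: "Desc (Aer k) = insert k (Desc a \<union> Desc b)"
        proof
          show "Desc (Aer k) \<subseteq> insert k (Desc a \<union> Desc b)"
          proof
            fix m assume "m \<in> Desc (Aer k)"
            then have "(Aer k, Aer m) \<in> r\<^sup>*" by (simp add: Desc_def)
            then show "m \<in> insert k (Desc a \<union> Desc b)"
            proof (cases rule: converse_rtranclE)
              case base then show ?thesis by simp
            next
              case (step y)
              then have "y = a \<or> y = b" using ri a_def b_def by auto
              then show ?thesis using step by (auto simp: Desc_def)
            qed
          qed
        next
          show "insert k (Desc a \<union> Desc b) \<subseteq> Desc (Aer k)"
            using ra rb by (auto simp: Desc_def intro: converse_rtrancl_into_rtrancl)
        qed
        have ka: "k \<notin> Desc a"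
        proof
          assume "k \<in> Desc a"
          then have "(Aer k, Aer k) \<in> r\<^sup>+" using ra by (auto simp: Desc_def intro: rtrancl_into_trancl2)
          then show False using nocyc by blast
        qed
        have kb: "k \<notin> Desc b"
        proof
          assume "k \<in> Desc b"
          then have "(Aer k, Aer k) \<in> r\<^sup>+" using rb by (auto simp: Desc_def intro: rtrancl_into_trancl2)
          then show False using nocyc by blast
        qed
        have ab: "Desc a \<inter> Desc b = {}"
        proof (rule ccontr)
          assume "Desc a \<inter> Desc b \<noteq> {}"
          then obtain m where ma: "(a, Aer m) \<in> r\<^sup>*" and mb: "(b, Aer m) \<in> r\<^sup>*" by (auto simp: Desc_def)
          have "a \<noteq> VX" "a \<noteq> VY" using ma noXY by blast+
          then obtain ja where ja: "a = Aer ja" by (cases a) auto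
          have "b \<noteq> VX" "b \<noteq> VY" using mb noXY by blast+
          then obtain jb where jb: "b = Aer jb" by (cases b) auto
          have "a \<noteq> b"
          proof
            assume "a = b"
            then have "tgt \<Gamma> (k,1) = Aer ja" "tgt \<Gamma> (k,2) = Aer ja" using ja a_def b_def by (auto simp: tgt_def)
            moreover have "(k,1) \<in> edges n" "(k,2) \<in> edges n" using k by (auto simp: edges_def)
            ultimately show False using U unfolding uniq_in_def by fastforce
          qed
          have "\<And>p q. (p,q) \<in> r\<^sup>* \<Longrightarrow> p \<noteq> q \<Longrightarrow> (Aer k, p) \<in> r \<Longrightarrow> (Aer k, q) \<in> r \<Longrightarrow> (\<exists>jq. q = Aer jq) \<Longrightarrow> False"
          proof -
            fix p q assume pq: "(p,q) \<in> r\<^sup>*" "p \<noteq> q" "(Aer k, p) \<in> r" "(Aer k, q) \<in> r" "\<exists>jq. q = Aer jq"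
            then have "(p,q) \<in> r\<^sup>+" by (meson rtranclD)
            then obtain u where "(p,u) \<in> r\<^sup>*" "(u,q) \<in> r" by (meson tranclD2)
            moreover have "u = Aer k" using src pq(4,5) \<open>(u,q) \<in> r\<close> by blast
            ultimately have "(Aer k, Aer k) \<in> r\<^sup>+" using pq(3) by (auto intro: rtrancl_into_trancl2)
            then show False using nocyc by blast
          qed
          moreover have "(a,b) \<in> r\<^sup>* \<or> (b,a) \<in> r\<^sup>*" using cmp ma mb by blast
          ultimately show False using \<open>a \<noteq> b\<close> ra rb ja jb by metis
        qed
        show "\<exists>t. tree_of_graph \<Gamma> t \<and> root_vtx t = v \<and> set (internal t) = Desc v \<and> distinct (internal t)"
          using ta tb setD ka kb ab Aer a_def b_def
          by (intro exI[of _ "Node k ta tb"]) auto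
      qed
    qed
  qed
  then obtain T where T: "\<And>v. v \<in> verts n \<Longrightarrow> tree_of_graph \<Gamma> (T v) \<and> root_vtx (T v) = v \<and> set (internal (T v)) = Desc v \<and> distinct (internal (T v))"
    by metis
  define Roots where "Roots = {\<rho>\<in>{1..n}. \<forall>u. (u, Aer \<rho>) \<notin> r}"
  define rs where "rs = sorted_list_of_set Roots"
  have rs: "set rs = Roots" "distinct rs" unfolding rs_def Roots_def by auto
  define ts where "ts = map (\<lambda>\<rho>. T (Aer \<rho>)) rs"
  have RV: "\<rho> \<in> Roots \<Longrightarrow> Aer \<rho> \<in> verts n" for \<rho> unfolding Roots_def vA by auto
  have rootpath: "\<rho>2 \<in> Roots \<Longrightarrow> (Aer \<rho>1, Aer \<rho>2) \<in> r\<^sup>* \<Longrightarrow> \<rho>1 = \<rho>2" for \<rho>1 \<rho>2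
    unfolding Roots_def by (auto elim: rtranclE)
  have key: "\<rho>1 \<in> Roots \<Longrightarrow> \<rho>2 \<in> Roots \<Longrightarrow> m \<in> Desc (Aer \<rho>1) \<Longrightarrow> m \<in> Desc (Aer \<rho>2) \<Longrightarrow> \<rho>1 = \<rho>2" for \<rho>1 \<rho>2 m
    unfolding Desc_def using cmp rootpath by blast
  have DescR: "Desc (Aer \<rho>) \<subseteq> {1..n}" if "\<rho> \<in> Roots" for \<rho>
  proof
    fix m assume "m \<in> Desc (Aer \<rho>)"
    then have "(Aer \<rho>, Aer m) \<in> r\<^sup>*" by (simp add: Desc_def)
    then show "m \<in> {1..n}"
    proof (cases rule: rtranclE)
      case base then show ?thesis using that Roots_def by auto
    next
      case (step y)
      then obtain k where "k \<in> {1..n}" "Aer m = fst (\<Gamma> k) \<or> Aer m = snd (\<Gamma> k)" using ri by auto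
      then show ?thesis using Gk vA by metis
    qed
  qed
  have anc: "\<forall>m. v = Aer m \<longrightarrow> m \<in> {1..n} \<longrightarrow> (\<exists>\<rho>\<in>Roots. m \<in> Desc (Aer \<rho>))" for v
  proof (induction v rule: wf_induct[OF finite_acyclic_wf[OF fin acyc]])
    case (1 v)
    show ?case
    proof (intro allI impI)
      fix m assume vm: "v = Aer m" and m: "m \<in> {1..n}"
      show "\<exists>\<rho>\<in>Roots. m \<in> Desc (Aer \<rho>)"
      proof (cases "m \<in> Roots")
        case True then show ?thesis by (auto simp: Desc_def)
      next
        case False
        then obtain u where u: "(u, Aer m) \<in> r" using m Roots_def by auto
        then obtain k where k: "k \<in> {1..n}" "u = Aer k" using ri by auto
        then obtain \<rho> where "\<rho> \<in> Roots" "k \<in> Desc (Aer \<rho>)" using 1 u vm by blast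
        then show ?thesis using u k by (auto simp: Desc_def intro: rtrancl_into_rtrancl)
      qed
    qed
  qed
  have set_int: "set (internal (T (Aer \<rho>))) = Desc (Aer \<rho>)" if "\<rho> \<in> Roots" for \<rho>
    using T RV that by blast
  have selfD: "\<rho> \<in> Desc (Aer \<rho>)" for \<rho> by (simp add: Desc_def)
  show ?thesis unfolding sym_admissible_def
  proof (intro disjI2 exI[of _ ts] conjI)
    show "\<forall>t\<in>set ts. (\<exists>k l r. t = Node k l r) \<and> tree_of_graph \<Gamma> t"
    proof
      fix t assume "t \<in> set ts"
      then obtain \<rho> where \<rho>: "\<rho> \<in> Roots" "t = T (Aer \<rho>)" using rs ts_def by auto
      then have "tree_of_graph \<Gamma> t" "root_vtx t = Aer \<rho>" using T RV by auto
      then show "(\<exists>k l r. t = Node k l r) \<and> tree_of_graph \<Gamma> t"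
        by (cases t rule: root_vtx.cases) auto
    qed
    show "set (concat (map internal ts)) = {1..n}"
    proof
      show "set (concat (map internal ts)) \<subseteq> {1..n}"
        using DescR set_int rs unfolding ts_def by auto
      show "{1..n} \<subseteq> set (concat (map internal ts))"
      proof
        fix m assume "m \<in> {1..n}"
        then obtain \<rho> where "\<rho> \<in> Roots" "m \<in> Desc (Aer \<rho>)" using anc by blast
        then show "m \<in> set (concat (map internal ts))" using set_int rs unfolding ts_def by auto
      qed
    qed
    show "distinct (concat (map internal ts))"
      unfolding distinct_concat_iff
    proof (intro conjI allI impI)
      have ne: "[] \<notin> set (map internal ts)"
        using set_int selfD rs unfolding ts_def by fastforce
      have inj: "inj_on (\<lambda>\<rho>. internal (T (Aer \<rho>))) (set rs)"
      proof (rule inj_onI)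
        fix x y assume "x \<in> set rs" "y \<in> set rs" "internal (T (Aer x)) = internal (T (Aer y))"
        then show "x = y" using set_int selfD key rs by metis
      qed
      have "distinct (map internal ts)" unfolding ts_def using inj rs
        by (simp add: distinct_map o_def)
      then show "distinct (removeAll [] (map internal ts))" using ne by simp
      show "ys \<in> set (map internal ts) \<Longrightarrow> distinct ys" for ys
        using T RV rs unfolding ts_def by auto
      show "set ys \<inter> set zs = {}" if yz: "ys \<in> set (map internal ts) \<and> zs \<in> set (map internal ts) \<and> ys \<noteq> zs" for ys zs
      proof -
        obtain x y where "x \<in> Roots" "y \<in> Roots" "ys = internal (T (Aer x))" "zs = internal (T (Aer y))"
          using yz rs unfolding ts_def by auto
        then show ?thesis using yz set_int key by blast
      qed
    qed
  qed
qed

lemma edges_in_list: "e \<in> edges n \<Longrightarrow> e \<in> set (concat (map (\<lambda>k. [(k, 1), (k, 2)]) [1..<Suc n]))"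
  unfolding edges_def by auto

lemma nonuniq_zero:
  assumes G: "in_G n \<Gamma>" and nu: "\<not> uniq_in n \<Gamma>"
  shows "B_op n \<Gamma> (lin_bivector c) f g x = 0"
proof -
  obtain j e e' where e: "e \<in> edges n" "e' \<in> edges n" "tgt \<Gamma> e = Aer j" "tgt \<Gamma> e' = Aer j" "e \<noteq> e'"
    using nu unfolding uniq_in_def by blast
  have "tgt \<Gamma> e \<in> verts n" using G e(1) unfolding in_G_def edges_def tgt_def by auto
  then have j: "j \<in> {1..n}" using e(3) unfolding verts_def by auto
  have "{e, e'} \<subseteq> set (edges_into n \<Gamma> (Aer j))"
    using e(1-4) edges_in_list[of e n] edges_in_list[of e' n] unfolding edges_into_def set_filter by blast
  then have "card {e, e'} \<le> card (set (edges_into n \<Gamma> (Aer j)))" by (intro card_mono) auto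
  also have "\<dots> \<le> length (edges_into n \<Gamma> (Aer j))" by (rule card_length)
  finally have len: "length (edges_into n \<Gamma> (Aer j)) \<ge> 2" using e(5) by simp
  have P: "(\<Prod>k\<in>{1..n}. pds (map I (edges_into n \<Gamma> (Aer k))) (lin_bivector c (I (k,1)) (I (k,2))) x) = 0" for I :: "nat \<times> nat \<Rightarrow> 'a"
    using j len by (intro prod_zero) (auto intro!: bexI[of _ j] pds_lin_zero)
  then show ?thesis unfolding B_op_def by (intro sum.neutral ballI) (simp only: P mult_zero_left)
qed

theorem proposition5p1p2:
  fixes c :: "'d::finite \<Rightarrow> 'd \<Rightarrow> 'd \<Rightarrow> real"
    and n :: nat and \<Gamma> :: graph
  assumes antisym: "\<And>i j k. c i j k = - c j i k"
    and jacobi: "\<And>i j l r. (\<Sum>m\<in>UNIV. c i j m * c m l r + c j l m * c m i r + c l i m * c m j r) = 0"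
    and graph: "in_G n \<Gamma>"
    and nonzero: "\<exists>f g x. smooth_fun f \<and> smooth_fun g \<and> B_op n \<Gamma> (lin_bivector c) f g x \<noteq> 0"
  shows "loop_graph n \<Gamma> \<or> sym_admissible n \<Gamma>"
proof -
  have "uniq_in n \<Gamma>" using nonuniq_zero[OF graph] nonzero by blast
  then show ?thesis using sym_adm[OF graph] by blast
qed

end
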